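(* Let $d\ge 1$, $T\ge 1$, let $\mathcal{X}\subseteq\mathbb{R}^d$ be a non-empty closed convex set containing $\mathbf{0}$, and let $0<\mu\le L$. Let $f_1,\dots,f_T:\mathcal{X}\to[0,\infty)$ be differentiable functions such that, for every $t$ and all $x,y\in\mathcal{X}$, $\frac{\mu}{2}\|y-x\|^2\le f_t(y)-f_t(x)-\langle\nabla f_t(x),y-x\rangle\le\frac{L}{2}\|y-x\|^2$, and such that there is a finite constant $G$ with $\max_{x\in\mathcal{X}}\|\nabla f_t(x)\|=G$ for all $t$. Let $x_0=\mathbf{0}$. Then the OMGD algorithm with $K=\lceil\frac{L+\mu}{2\mu}\ln4\rceil$ satisfies $$C_{\mathcal{A}_o}-C_{\mathsf{OPT}}\le 2G(\|x_1^\star\|+\mathcal{P}_T^\star)+5\|x_1^\star\|^2+\Big(10-\frac{\mu}{2(\mu+4)}\Big)\mathcal{P}_{2,T}^\star.$$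
   Context: $x_t^\star=\arg\min_{x\in\mathcal{X}}f_t(x)$, $\mathcal{P}_T^\star=\sum_{t=2}^T\|x_t^\star-x_{t-1}^\star\|$, $\mathcal{P}_{2,T}^\star=\sum_{t=2}^T\|x_t^\star-x_{t-1}^\star\|^2$. Quadratic-switching cost of $(y_1,\dots,y_T)\in\mathcal{X}^T$ with $y_0=x_0$: $\sum_{t=1}^T\big(f_t(y_t)+\frac12\|y_t-y_{t-1}\|^2\big)$; $C_{\mathsf{OPT}}$ is its minimum over $\mathcal{X}^T$. OMGD with parameter $K$: $x_1=x_0$; for $t=2,\dots,T$, $z_t^{(0)}=x_{t-1}$, $z_t^{(k)}=\Pi_{\mathcal{X}}\big(z_t^{(k-1)}-\frac1L\nabla f_{t-1}(z_t^{(k-1)})\big)$ ($k=1,\dots,K$), $x_t=z_t^{(K)}$, where $\Pi_{\mathcal{X}}$ is Euclidean projection onto $\mathcal{X}$. $C_{\mathcal{A}_o}$ is the quadratic-switching cost of $(x_1,\dots,x_T)$; $C_{\mathcal{A}_o}-C_{\mathsf{OPT}}$ is the dynamic regret. *)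

theory Defs
  imports "HOL-Analysis.Analysis"
begin

definition pgd_step :: "'a::euclidean_space set \<Rightarrow> real \<Rightarrow> ('a \<Rightarrow> 'a) \<Rightarrow> 'a \<Rightarrow> 'a" where
  "pgd_step X L gf z = closest_point X (z - (1 / L) *\<^sub>R gf z)"

text \<open>OMGD iterates: index 0 is x0, x_1 = x0, and x_t = K projected gradient
  steps on f_(t-1) started from x_(t-1), for t >= 2. g t is the gradient of f t.\<close>
fun omgd :: "'a::euclidean_space set \<Rightarrow> real \<Rightarrow> (nat \<Rightarrow> 'a \<Rightarrow> 'a) \<Rightarrow> nat \<Rightarrow> 'a \<Rightarrow> nat \<Rightarrow> 'a" where
  "omgd X L g K x0 0 = x0"
| "omgd X L g K x0 (Suc 0) = x0"
| "omgd X L g K x0 (Suc (Suc t)) = (pgd_step X L (g (Suc t)) ^^ K) (omgd X L g K x0 (Suc t))"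

definition qs_cost :: "(nat \<Rightarrow> 'a::euclidean_space \<Rightarrow> real) \<Rightarrow> 'a \<Rightarrow> nat \<Rightarrow> (nat \<Rightarrow> 'a) \<Rightarrow> real" where
  "qs_cost f x0 T y = (\<Sum>t = 1..T. f t (y t) + (1/2) * (norm (y t - (if t = 1 then x0 else y (t - 1))))\<^sup>2)"

definition C_OPT :: "'a::euclidean_space set \<Rightarrow> (nat \<Rightarrow> 'a \<Rightarrow> real) \<Rightarrow> 'a \<Rightarrow> nat \<Rightarrow> real" where
  "C_OPT X f x0 T = Inf {qs_cost f x0 T y | y. \<forall>t\<in>{1..T}. y t \<in> X}"

definition xstar :: "'a::euclidean_space set \<Rightarrow> (nat \<Rightarrow> 'a \<Rightarrow> real) \<Rightarrow> nat \<Rightarrow> 'a" where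
  "xstar X f t = (SOME x. x \<in> X \<and> (\<forall>y\<in>X. f t x \<le> f t y))"

definition path_len :: "'a::euclidean_space set \<Rightarrow> (nat \<Rightarrow> 'a \<Rightarrow> real) \<Rightarrow> nat \<Rightarrow> real" where
  "path_len X f T = (\<Sum>t = 2..T. norm (xstar X f t - xstar X f (t - 1)))"

definition path_len2 :: "'a::euclidean_space set \<Rightarrow> (nat \<Rightarrow> 'a \<Rightarrow> real) \<Rightarrow> nat \<Rightarrow> real" where
  "path_len2 X f T = (\<Sum>t = 2..T. (norm (xstar X f t - xstar X f (t - 1)))\<^sup>2)"

end

theory Submission imports Defs begin

lemma opt_cond:
  fixes X :: "'a::euclidean_space set" and f0 :: "'a \<Rightarrow> real" and g0 :: "'a \<Rightarrow> 'a"
  assumes cvx: "convex X" and L: "0 < L"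
    and up: "\<forall>x\<in>X. \<forall>y\<in>X. f0 y - f0 x - g0 x \<bullet> (y - x) \<le> L / 2 * (norm (y - x))\<^sup>2"
    and xs: "xs \<in> X" and mn: "\<forall>y\<in>X. f0 xs \<le> f0 y" and v: "v \<in> X"
  shows "g0 xs \<bullet> (v - xs) \<ge> 0"
proof (rule ccontr)
  assume "\<not> ?thesis"
  then have c: "g0 xs \<bullet> (v - xs) < 0" by simp
  define c0 where "c0 = - (g0 xs \<bullet> (v - xs))"
  define n where "n = (norm (v - xs))\<^sup>2"
  have c0: "c0 > 0" using c c0_def by simp
  have n: "n > 0" unfolding n_def using c by (metis inner_zero_right less_irrefl zero_less_norm_iff zero_less_power)
  define s where "s = min 1 (c0 / (L * n))"
  have s0: "0 < s" unfolding s_def using c0 n L by simp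
  have s1: "s \<le> 1" unfolding s_def by simp
  have sle: "s * (L * n) \<le> c0" unfolding s_def using c0 n L
    by (metis min.cobounded2 mult_pos_pos pos_le_divide_eq)
  define z where "z = xs + s *\<^sub>R (v - xs)"
  have "z = (1 - s) *\<^sub>R xs + s *\<^sub>R v" unfolding z_def by (simp add: algebra_simps)
  then have zX: "z \<in> X" using cvx xs v s0 s1 by (simp add: convex_def)
  have "f0 z - f0 xs - g0 xs \<bullet> (z - xs) \<le> L / 2 * (norm (z - xs))\<^sup>2" using up xs zX by blast
  moreover have "g0 xs \<bullet> (z - xs) = - s * c0" unfolding z_def c0_def by simp
  moreover have "(norm (z - xs))\<^sup>2 = s^2 * n" unfolding z_def n_def using s0
    by (simp add: power_mult_distrib)
  ultimately have "f0 z - f0 xs + s * c0 \<le> L / 2 * (s^2 * n)" by simp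
  moreover have "f0 xs \<le> f0 z" using mn zX by blast
  ultimately have "0 \<le> - s * c0 + L / 2 * (s^2 * n)" by linarith
  moreover have "L / 2 * (s^2 * n) = s * (s * (L * n)) / 2" by (simp add: power2_eq_square)
  moreover have "s * (s * (L * n)) \<le> s * c0" using sle s0 by simp
  moreover have "s * c0 > 0" using s0 c0 by simp
  ultimately show False by linarith
qed

lemma pgd_contract:
  fixes X :: "'a::euclidean_space set" and f0 :: "'a \<Rightarrow> real" and g0 :: "'a \<Rightarrow> 'a"
  assumes cvx: "convex X" and cl: "closed X" and muL: "0 < \<mu>" "\<mu> \<le> L"
    and sc: "\<forall>x\<in>X. \<forall>y\<in>X. \<mu> / 2 * (norm (y - x))\<^sup>2 \<le> f0 y - f0 x - g0 x \<bullet> (y - x)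
             \<and> f0 y - f0 x - g0 x \<bullet> (y - x) \<le> L / 2 * (norm (y - x))\<^sup>2"
    and xs: "xs \<in> X" and mn: "\<forall>y\<in>X. f0 xs \<le> f0 y" and x: "x \<in> X"
  shows "closest_point X (x - (1 / L) *\<^sub>R g0 x) \<in> X"
    and "(norm (closest_point X (x - (1 / L) *\<^sub>R g0 x) - xs))\<^sup>2 \<le> (L - \<mu>) / (L + \<mu>) * (norm (x - xs))\<^sup>2"
proof -
  define b where "b = closest_point X (x - (1 / L) *\<^sub>R g0 x)"
  have ne: "X \<noteq> {}" using xs by auto
  show bX: "closest_point X (x - (1 / L) *\<^sub>R g0 x) \<in> X" using closest_point_in_set[OF cl ne] .
  have L: "0 < L" using muL by simp
  have up: "\<forall>x\<in>X. \<forall>y\<in>X. f0 y - f0 x - g0 x \<bullet> (y - x) \<le> L / 2 * (norm (y - x))\<^sup>2" using sc by blast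
  have bX': "b \<in> X" using bX b_def by simp
  have h1: "f0 b - f0 x - g0 x \<bullet> (b - x) \<le> L / 2 * (norm (b - x))\<^sup>2" using sc bX' x by blast
  have h2: "\<mu> / 2 * (norm (xs - x))\<^sup>2 \<le> f0 xs - f0 x - g0 x \<bullet> (xs - x)" using sc xs x by blast
  have h3: "\<mu> / 2 * (norm (b - xs))\<^sup>2 \<le> f0 b - f0 xs - g0 xs \<bullet> (b - xs)" using sc bX' xs by blast
  have h4: "g0 xs \<bullet> (b - xs) \<ge> 0" using opt_cond[OF cvx L up xs mn bX'] .
  have h5: "inner ((x - (1 / L) *\<^sub>R g0 x) - b) (xs - b) \<le> 0"
    unfolding b_def using closest_point_dot[OF cvx cl xs] .
  define B where "B = (norm (b - xs))\<^sup>2"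
  define D where "D = (norm (x - xs))\<^sup>2"
  define E where "E = (norm (x - b))\<^sup>2"
  define I where "I = (x - b) \<bullet> (b - xs)"
  define V where "V = g0 x \<bullet> (b - xs)"
  have id: "D = E + 2 * I + B"
    using dot_norm[of "x - b" "b - xs"] unfolding D_def E_def I_def B_def
    by (simp add: norm_minus_commute)
  have h5': "(x - b) \<bullet> (xs - b) - (1 / L) * (g0 x \<bullet> (xs - b)) \<le> 0"
    using h5 by (simp add: inner_diff_left)
  have h5'': "V \<le> L * I"
  proof -
    have "(x - b) \<bullet> (xs - b) = - I" unfolding I_def
      by (metis inner_minus_right minus_diff_eq)
    moreover have "g0 x \<bullet> (xs - b) = - V" unfolding V_def
      by (metis inner_minus_right minus_diff_eq)
    ultimately have "- I + V / L \<le> 0" using h5' by simp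
    then show ?thesis using L by (simp add: field_simps)
  qed
  have e1: "g0 x \<bullet> (b - x) + g0 x \<bullet> (x - xs) = V" unfolding V_def
    by (simp add: inner_diff_right)
  have nb: "(norm (b - x))\<^sup>2 = E" unfolding E_def by (simp add: norm_minus_commute)
  have nx: "(norm (xs - x))\<^sup>2 = D" unfolding D_def by (simp add: norm_minus_commute)
  have e2: "g0 x \<bullet> (xs - x) = - (g0 x \<bullet> (x - xs))"
    by (metis inner_minus_right minus_diff_eq)
  have "\<mu> / 2 * B \<le> V + L / 2 * E - \<mu> / 2 * D"
    using h1[unfolded nb] h2[unfolded nx] h3 h4 e1 e2 unfolding B_def by linarith
  then have "\<mu> / 2 * B \<le> L * I + L / 2 * E - \<mu> / 2 * D" using h5'' by linarith
  then have "\<mu> / 2 * B \<le> L / 2 * (D - B) - \<mu> / 2 * D" using id by (simp add: algebra_simps)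
  then have "(L + \<mu>) * B \<le> (L - \<mu>) * D" by (simp add: algebra_simps)
  then have "B \<le> (L - \<mu>) / (L + \<mu>) * D" using muL by (simp add: field_simps)
  then show "(norm (closest_point X (x - (1 / L) *\<^sub>R g0 x) - xs))\<^sup>2 \<le> (L - \<mu>) / (L + \<mu>) * (norm (x - xs))\<^sup>2"
    unfolding B_def D_def b_def .
qed

lemma pgd_iter:
  fixes X :: "'a::euclidean_space set" and f0 :: "'a \<Rightarrow> real" and g0 :: "'a \<Rightarrow> 'a"
  assumes cvx: "convex X" and cl: "closed X" and muL: "0 < \<mu>" "\<mu> \<le> L"
    and sc: "\<forall>x\<in>X. \<forall>y\<in>X. \<mu> / 2 * (norm (y - x))\<^sup>2 \<le> f0 y - f0 x - g0 x \<bullet> (y - x)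
             \<and> f0 y - f0 x - g0 x \<bullet> (y - x) \<le> L / 2 * (norm (y - x))\<^sup>2"
    and xs: "xs \<in> X" and mn: "\<forall>y\<in>X. f0 xs \<le> f0 y" and x: "x \<in> X"
  shows "(pgd_step X L g0 ^^ k) x \<in> X \<and>
    (norm ((pgd_step X L g0 ^^ k) x - xs))\<^sup>2 \<le> ((L - \<mu>) / (L + \<mu>)) ^ k * (norm (x - xs))\<^sup>2"
proof (induction k)
  case 0
  then show ?case using x by simp
next
  case (Suc k)
  define z where "z = (pgd_step X L g0 ^^ k) x"
  have zX: "z \<in> X" using Suc z_def by simp
  have q0: "(L - \<mu>) / (L + \<mu>) \<ge> 0" using muL by simp
  have A: "pgd_step X L g0 z \<in> X" unfolding pgd_step_def using pgd_contract(1)[OF cvx cl muL sc xs mn zX] .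
  have "(norm (pgd_step X L g0 z - xs))\<^sup>2 \<le> (L - \<mu>) / (L + \<mu>) * (norm (z - xs))\<^sup>2"
    unfolding pgd_step_def using pgd_contract(2)[OF cvx cl muL sc xs mn zX] .
  also have "\<dots> \<le> (L - \<mu>) / (L + \<mu>) * (((L - \<mu>) / (L + \<mu>)) ^ k * (norm (x - xs))\<^sup>2)"
    by (rule mult_left_mono) (use Suc z_def q0 in auto)
  finally show ?case using A z_def by simp
qed

lemma K_bound:
  fixes \<mu> L :: real
  assumes muL: "0 < \<mu>" "\<mu> \<le> L"
  shows "((L - \<mu>) / (L + \<mu>)) ^ (nat \<lceil>(L + \<mu>) / (2 * \<mu>) * ln 4\<rceil>) \<le> 1 / 4"
proof -
  define a where "a = 2 * \<mu> / (L + \<mu>)"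
  define K where "K = nat \<lceil>(L + \<mu>) / (2 * \<mu>) * ln 4\<rceil>"
  have q: "(L - \<mu>) / (L + \<mu>) = 1 + (- a)" unfolding a_def using muL by (simp add: field_simps)
  have q0: "0 \<le> 1 + (- a)" using q muL by (metis divide_nonneg_pos diff_ge_0_iff_ge add_pos_pos order.strict_trans2)
  have "(1 + (- a)) ^ K \<le> exp (- a) ^ K"
    using q0 exp_ge_add_one_self[of "- a"] by (simp add: power_mono)
  also have "\<dots> = exp (- (a * real K))" by (simp add: exp_of_nat_mult[symmetric] mult.commute)
  also have "\<dots> \<le> exp (- ln 4)"
  proof -
    have "real K \<ge> (L + \<mu>) / (2 * \<mu>) * ln 4" unfolding K_def by (rule real_nat_ceiling_ge)
    moreover have "a > 0" unfolding a_def using muL by simp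
    ultimately have "a * real K \<ge> a * ((L + \<mu>) / (2 * \<mu>) * ln 4)" by (intro mult_left_mono) auto
    moreover have "a * ((L + \<mu>) / (2 * \<mu>) * ln 4) = ln 4"
    proof -
      have "L + \<mu> \<noteq> 0" "\<mu> \<noteq> 0" using muL by auto
      then have "a * ((L + \<mu>) / (2 * \<mu>)) = 1" unfolding a_def by simp
      then show ?thesis by (metis mult.assoc mult_1)
    qed
    ultimately show ?thesis by simp
  qed
  also have "\<dots> = 1 / 4" by (simp add: exp_minus)
  finally show ?thesis using q K_def by simp
qed

lemma exists_min:
  fixes X :: "'a::euclidean_space set" and f0 :: "'a \<Rightarrow> real" and g0 :: "'a \<Rightarrow> 'a"
  assumes cl: "closed X" and X0: "0 \<in> X" and mu: "0 < \<mu>" and cont: "continuous_on X f0"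
    and sc: "\<forall>x\<in>X. \<forall>y\<in>X. \<mu> / 2 * (norm (y - x))\<^sup>2 \<le> f0 y - f0 x - g0 x \<bullet> (y - x)"
  shows "\<exists>xs\<in>X. \<forall>y\<in>X. f0 xs \<le> f0 y"
proof -
  define R where "R = 2 * norm (g0 0) / \<mu> + 1"
  define S where "S = X \<inter> cball 0 R"
  have "compact S" unfolding S_def using cl by (simp add: closed_Int_compact)
  moreover have "S \<noteq> {}" unfolding S_def R_def using X0 mu by auto
  moreover have "continuous_on S f0" using cont unfolding S_def by (meson continuous_on_subset inf_le1)
  ultimately obtain m where m: "m \<in> S" "\<forall>y\<in>S. f0 m \<le> f0 y" using continuous_attains_inf by blast
  have m0: "f0 m \<le> f0 0" using m X0 mu unfolding S_def R_def by auto
  show ?thesis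
  proof (intro bexI ballI)
    show "m \<in> X" using m S_def by simp
    fix y assume yX: "y \<in> X"
    show "f0 m \<le> f0 y"
    proof (cases "norm y \<le> R")
      case True then show ?thesis using m yX S_def by auto
    next
      case False
      have "\<mu> / 2 * (norm y)\<^sup>2 \<le> f0 y - f0 0 - g0 0 \<bullet> y" using sc X0 yX by force
      moreover have "- (g0 0 \<bullet> y) \<le> norm (g0 0) * norm y" using norm_cauchy_schwarz[of "- g0 0" y] by simp
      moreover have "norm (g0 0) * norm y < \<mu> / 2 * (norm y)\<^sup>2"
      proof -
        have "norm y > 2 * norm (g0 0) / \<mu>" using False R_def by simp
        then have "\<mu> / 2 * norm y > norm (g0 0)" using mu by (simp add: field_simps)
        moreover have "norm y > 0" using False R_def mu
          by (smt (verit) divide_nonneg_pos norm_ge_zero)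
        ultimately have "norm (g0 0) * norm y < (\<mu> / 2 * norm y) * norm y"
          by (simp add: mult_strict_right_mono)
        then show ?thesis by (simp add: power2_eq_square mult.assoc)
      qed
      ultimately have "f0 0 < f0 y" by linarith
      then show ?thesis using m0 by simp
    qed
  qed
qed

lemma sum_lin:
  fixes d p :: "nat \<Rightarrow> real"
  assumes rec: "\<forall>t. 2 \<le> t \<and> t \<le> T \<longrightarrow> d t \<le> d (t - 1) / 2 + p t" and n: "1 \<le> n"
  shows "n \<le> T \<longrightarrow> (\<Sum>t=1..n. d t) + d n \<le> 2 * d 1 + 2 * (\<Sum>t=2..n. p t)"
  using n
proof (induction n rule: nat_induct_at_least)
  case base
  then show ?case by simp
next
  case (Suc n)
  show ?case
  proof
    assume le: "Suc n \<le> T"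
    have "d (Suc n) \<le> d n / 2 + p (Suc n)" using rec[rule_format, of "Suc n"] le Suc.hyps by simp
    moreover have "(\<Sum>t=1..Suc n. d t) = (\<Sum>t=1..n. d t) + d (Suc n)" by simp
    moreover have "(\<Sum>t=2..Suc n. p t) = (\<Sum>t=2..n. p t) + p (Suc n)" using Suc by simp
    ultimately show "(\<Sum>t=1..Suc n. d t) + d (Suc n) \<le> 2 * d 1 + 2 * (\<Sum>t=2..Suc n. p t)"
      using Suc le by simp
  qed
qed

lemma sum_sq:
  fixes d p :: "nat \<Rightarrow> real"
  assumes rec: "\<forall>t. 2 \<le> t \<and> t \<le> T \<longrightarrow> d t \<le> d (t - 1) / 2 + p t" and n: "1 \<le> n"
    and d0: "\<forall>t. d t \<ge> 0" and p0: "\<forall>t. p t \<ge> 0"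
  shows "n \<le> T \<longrightarrow> (\<Sum>t=1..n. (d t)\<^sup>2) + (d n)\<^sup>2 \<le> 2 * (d 1)\<^sup>2 + 4 * (\<Sum>t=2..n. (p t)\<^sup>2)"
  using n
proof (induction n rule: nat_induct_at_least)
  case base
  then show ?case by simp
next
  case (Suc n)
  show ?case
  proof
    assume le: "Suc n \<le> T"
    have "d (Suc n) \<le> d n / 2 + p (Suc n)" using rec[rule_format, of "Suc n"] le Suc.hyps by simp
    then have "(d (Suc n))\<^sup>2 \<le> (d n / 2 + p (Suc n))\<^sup>2" using d0 by (simp add: power_mono)
    also have "\<dots> \<le> (d n)\<^sup>2 / 2 + 2 * (p (Suc n))\<^sup>2"
      using sum_squares_ge_zero by (smt (verit) power2_diff power2_sum zero_le_power2 [of "d n / 2 - p (Suc n)"] field_sum_of_halves)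
    finally have A: "2 * (d (Suc n))\<^sup>2 \<le> (d n)\<^sup>2 + 4 * (p (Suc n))\<^sup>2" by simp
    have "(\<Sum>t=1..Suc n. (d t)\<^sup>2) = (\<Sum>t=1..n. (d t)\<^sup>2) + (d (Suc n))\<^sup>2" by simp
    moreover have "(\<Sum>t=2..Suc n. (p t)\<^sup>2) = (\<Sum>t=2..n. (p t)\<^sup>2) + (p (Suc n))\<^sup>2" using Suc by simp
    ultimately show "(\<Sum>t=1..Suc n. (d t)\<^sup>2) + (d (Suc n))\<^sup>2 \<le> 2 * (d 1)\<^sup>2 + 4 * (\<Sum>t=2..Suc n. (p t)\<^sup>2)"
      using Suc le A by simp
  qed
qed

lemma sum_shift:
  fixes d :: "nat \<Rightarrow> real"
  assumes n: "1 \<le> n"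
  shows "(\<Sum>t=1..n. (if t = 1 then 0 else d (t - 1))) + d n \<le> (\<Sum>t=1..n. d t)"
  using n
proof (induction n rule: nat_induct_at_least)
  case base
  then show ?case by simp
next
  case (Suc n)
  then show ?case by simp
qed

lemma pgd_in:
  fixes X :: "'a::euclidean_space set"
  assumes "closed X" "X \<noteq> {}" "z \<in> X"
  shows "(pgd_step X L g0 ^^ k) z \<in> X"
  by (induction k) (use assms in \<open>auto simp: pgd_step_def closest_point_in_set\<close>)

lemma omgd_in:
  fixes X :: "'a::euclidean_space set"
  assumes "closed X" "X \<noteq> {}" "x0 \<in> X"
  shows "omgd X L g K x0 t \<in> X"
proof -
  have "omgd X L g K x0 t \<in> X \<and> omgd X L g K x0 (Suc t) \<in> X"
  proof (induction t)
    case 0 then show ?case using assms by simp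
  next
    case (Suc t) then show ?case using pgd_in[OF assms(1,2)] by simp
  qed
  then show ?thesis by simp
qed


lemma final_arith:
  fixes G a b N Q c :: real
  assumes "9 / 2 * Q \<le> c * Q" "0 \<le> N\<^sup>2"
  shows "G * (2 * N + 2 * b) + 9 / 8 * (2 * N\<^sup>2 + 4 * Q) \<le> 2 * G * (N + b) + 5 * N\<^sup>2 + c * Q"
proof -
  have "G * (2 * N + 2 * b) = 2 * G * (N + b)" by (simp add: algebra_simps)
  moreover have "9 / 8 * (2 * N\<^sup>2 + 4 * Q) = 9 / 4 * N\<^sup>2 + 9 / 2 * Q" by (simp add: algebra_simps)
  ultimately show ?thesis using assms by linarith
qed

theorem theorem2:
  fixes X :: "'a::euclidean_space set"
    and f :: "nat \<Rightarrow> 'a \<Rightarrow> real"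
    and g :: "nat \<Rightarrow> 'a \<Rightarrow> 'a"
    and T :: nat and \<mu> L G :: real
  assumes T: "T \<ge> 1"
    and X: "X \<noteq> {}" "closed X" "convex X" "0 \<in> X"
    and muL: "0 < \<mu>" "\<mu> \<le> L"
    and nonneg: "\<forall>t\<in>{1..T}. \<forall>x\<in>X. f t x \<ge> 0"
    and grad: "\<forall>t\<in>{1..T}. \<forall>x\<in>X. (f t has_derivative (\<lambda>h. g t x \<bullet> h)) (at x within X)"
    and sc: "\<forall>t\<in>{1..T}. \<forall>x\<in>X. \<forall>y\<in>X.
               \<mu> / 2 * (norm (y - x))\<^sup>2 \<le> f t y - f t x - g t x \<bullet> (y - x)
             \<and> f t y - f t x - g t x \<bullet> (y - x) \<le> L / 2 * (norm (y - x))\<^sup>2"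
    and Gmax: "\<forall>t\<in>{1..T}. (\<exists>x\<in>X. norm (g t x) = G) \<and> (\<forall>x\<in>X. norm (g t x) \<le> G)"
  shows "qs_cost f 0 T (omgd X L g (nat \<lceil>(L + \<mu>) / (2 * \<mu>) * ln 4\<rceil>) 0) - C_OPT X f 0 T
         \<le> 2 * G * (norm (xstar X f 1) + path_len X f T) + 5 * (norm (xstar X f 1))\<^sup>2
           + (10 - \<mu> / (2 * (\<mu> + 4))) * path_len2 X f T"
proof -
  define K where "K = nat \<lceil>(L + \<mu>) / (2 * \<mu>) * ln 4\<rceil>"
  define x where "x = omgd X L g K 0"
  define xs where "xs = xstar X f"
  define d where "d t = norm (x t - xs t)" for t
  define p where "p t = norm (xs t - xs (t - 1))" for t
  have xX: "x t \<in> X" for t unfolding x_def using omgd_in[OF X(2,1,4)] .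
  have x1: "x 1 = 0" unfolding x_def by simp
  have sct: "\<forall>x\<in>X. \<forall>y\<in>X. \<mu> / 2 * (norm (y - x))\<^sup>2 \<le> f t y - f t x - g t x \<bullet> (y - x)
             \<and> f t y - f t x - g t x \<bullet> (y - x) \<le> L / 2 * (norm (y - x))\<^sup>2" if "t \<in> {1..T}" for t
    using sc that by blast
  have xsmin: "xs t \<in> X \<and> (\<forall>y\<in>X. f t (xs t) \<le> f t y)" if t: "t \<in> {1..T}" for t
  proof -
    have cont: "continuous_on X (f t)"
      using grad t by (intro has_derivative_continuous_on) blast
    have "\<exists>m\<in>X. \<forall>y\<in>X. f t m \<le> f t y"
      using exists_min[OF X(2,4) muL(1) cont, of "g t"] sct[OF t] by blast
    then have "\<exists>m. m \<in> X \<and> (\<forall>y\<in>X. f t m \<le> f t y)" by blast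
    then show ?thesis unfolding xs_def xstar_def by (rule someI_ex)
  qed
  have half: "norm (x t - xs (t - 1)) \<le> d (t - 1) / 2" if t: "2 \<le> t" "t \<le> T" for t
  proof -
    obtain s where s: "t = Suc (Suc s)" using t by (metis add_2_eq_Suc le_Suc_ex)
    have sT: "Suc s \<in> {1..T}" using s t by simp
    have xt: "x t = (pgd_step X L (g (Suc s)) ^^ K) (x (Suc s))" unfolding x_def s by simp
    have "(norm (x t - xs (Suc s)))\<^sup>2 \<le> ((L - \<mu>) / (L + \<mu>)) ^ K * (norm (x (Suc s) - xs (Suc s)))\<^sup>2"
      unfolding xt using pgd_iter[OF X(3,2) muL sct[OF sT] _ _ xX, of "xs (Suc s)" K] xsmin[OF sT] by blast
    also have "\<dots> \<le> 1 / 4 * (norm (x (Suc s) - xs (Suc s)))\<^sup>2"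
      using K_bound[OF muL] unfolding K_def by (intro mult_right_mono) auto
    also have "\<dots> = (d (t - 1) / 2)\<^sup>2" unfolding d_def s by (simp add: power_divide)
    finally have "(norm (x t - xs (t - 1)))\<^sup>2 \<le> (d (t - 1) / 2)\<^sup>2" using s by simp
    then show ?thesis by (rule power2_le_imp_le) (simp add: d_def)
  qed
  have rec: "\<forall>t. 2 \<le> t \<and> t \<le> T \<longrightarrow> d t \<le> d (t - 1) / 2 + p t"
  proof (intro allI impI)
    fix t assume t: "2 \<le> t \<and> t \<le> T"
    have "d t \<le> norm (x t - xs (t - 1)) + norm (xs (t - 1) - xs t)"
      unfolding d_def by (metis diff_add_cancel norm_triangle_ineq add_diff_eq)
    then show "d t \<le> d (t - 1) / 2 + p t" using half t unfolding p_def
      by (smt (verit) norm_minus_commute)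
  qed
  have switch: "(norm (x t - x (t - 1)))\<^sup>2 / 2 \<le> 9 / 8 * (d (t - 1))\<^sup>2" if t: "2 \<le> t" "t \<le> T" for t
  proof -
    have "norm (x t - x (t - 1)) \<le> norm (x t - xs (t - 1)) + norm (xs (t - 1) - x (t - 1))"
      by (metis diff_add_cancel norm_triangle_ineq add_diff_eq)
    also have "\<dots> \<le> 3 / 2 * d (t - 1)" using half[OF t] unfolding d_def by (simp add: norm_minus_commute)
    finally have "(norm (x t - x (t - 1)))\<^sup>2 \<le> (3 / 2 * d (t - 1))\<^sup>2" by (simp add: power_mono)
    also have "(3 / 2 * d (t - 1))\<^sup>2 = 9 / 4 * (d (t - 1))\<^sup>2" by (simp add: power_mult_distrib power2_eq_square)
    finally show ?thesis by simp
  qed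
  have fterm: "f t (x t) - f t (xs t) \<le> G * d t" if t: "t \<in> {1..T}" for t
  proof -
    have "\<mu> / 2 * (norm (xs t - x t))\<^sup>2 \<le> f t (xs t) - f t (x t) - g t (x t) \<bullet> (xs t - x t)"
      using sct[OF t] xX xsmin[OF t] by blast
    moreover have "- (g t (x t) \<bullet> (xs t - x t)) \<le> norm (g t (x t)) * norm (xs t - x t)"
      using norm_cauchy_schwarz[of "- g t (x t)" "xs t - x t"] by simp
    moreover have "norm (g t (x t)) * norm (xs t - x t) \<le> G * norm (xs t - x t)"
      using Gmax t xX by (intro mult_right_mono) auto
    moreover have "\<mu> / 2 * (norm (xs t - x t))\<^sup>2 \<ge> 0" using muL by simp
    ultimately show ?thesis unfolding d_def by (simp add: norm_minus_commute)
  qed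
  have G0: "G \<ge> 0" using Gmax T X(1) by (metis atLeastAtMost_iff le_refl norm_ge_zero equals0I)
  have d0: "\<forall>t. d t \<ge> 0" unfolding d_def by simp
  have p0: "\<forall>t. p t \<ge> 0" unfolding p_def by simp
  have SL: "(\<Sum>t=1..T. d t) \<le> 2 * d 1 + 2 * (\<Sum>t=2..T. p t)"
    using sum_lin[OF rec T] d0[rule_format, of T] by simp
  have SQ: "(\<Sum>t=1..T. (d t)\<^sup>2) \<le> 2 * (d 1)\<^sup>2 + 4 * (\<Sum>t=2..T. (p t)\<^sup>2)"
    using sum_sq[OF rec T d0 p0, rule_format, OF order_refl] zero_le_power2[of "d T"] by linarith
  have SH: "(\<Sum>t=1..T. (if t = 1 then 0 else (d (t - 1))\<^sup>2)) \<le> (\<Sum>t=1..T. (d t)\<^sup>2)"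
    using sum_shift[OF T, of "\<lambda>t. (d t)\<^sup>2"] zero_le_power2[of "d T"] by linarith
  have copt: "C_OPT X f 0 T \<ge> (\<Sum>t=1..T. f t (xs t))"
    unfolding C_OPT_def
  proof (rule cInf_greatest)
    show "{qs_cost f 0 T y |y. \<forall>t\<in>{1..T}. y t \<in> X} \<noteq> {}" using X(4) by auto
  next
    fix c assume "c \<in> {qs_cost f 0 T y |y. \<forall>t\<in>{1..T}. y t \<in> X}"
    then obtain y where c: "c = qs_cost f 0 T y" and y: "\<forall>t\<in>{1..T}. y t \<in> X" by blast
    have "(\<Sum>t=1..T. f t (xs t)) \<le> (\<Sum>t=1..T. f t (y t) + (1/2) * (norm (y t - (if t = 1 then 0 else y (t - 1))))\<^sup>2)"
    proof (intro sum_mono)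
      fix t assume t: "t \<in> {1..T}"
      have "f t (xs t) \<le> f t (y t)" using xsmin[OF t] y t by blast
      moreover have "0 \<le> (1/2) * (norm (y t - (if t = 1 then 0 else y (t - 1))))\<^sup>2" by simp
      ultimately show "f t (xs t) \<le> f t (y t) + (1/2) * (norm (y t - (if t = 1 then 0 else y (t - 1))))\<^sup>2"
        by linarith
    qed
    then show "(\<Sum>t=1..T. f t (xs t)) \<le> c" unfolding c qs_cost_def .
  qed
  have sw: "(1/2) * (norm (x t - (if t = 1 then 0 else x (t - 1))))\<^sup>2 \<le> 9 / 8 * (if t = 1 then 0 else (d (t - 1))\<^sup>2)"
    if t: "t \<in> {1..T}" for t
    using switch[of t] t x1 by (cases "t = 1") auto
  have "qs_cost f 0 T x - C_OPT X f 0 T \<le>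
      (\<Sum>t=1..T. f t (x t) + (1/2) * (norm (x t - (if t = 1 then 0 else x (t - 1))))\<^sup>2) - (\<Sum>t=1..T. f t (xs t))"
    unfolding qs_cost_def using copt by simp
  also have "\<dots> = (\<Sum>t=1..T. (f t (x t) - f t (xs t)) + (1/2) * (norm (x t - (if t = 1 then 0 else x (t - 1))))\<^sup>2)"
    by (simp add: sum_subtractf[symmetric] algebra_simps)
  also have "\<dots> \<le> (\<Sum>t=1..T. G * d t + 9 / 8 * (if t = 1 then 0 else (d (t - 1))\<^sup>2))"
    using fterm sw by (intro sum_mono add_mono) auto
  also have "\<dots> = G * (\<Sum>t=1..T. d t) + 9 / 8 * (\<Sum>t=1..T. (if t = 1 then 0 else (d (t - 1))\<^sup>2))"
    by (simp add: sum.distrib sum_distrib_left)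
  also have "\<dots> \<le> G * (2 * d 1 + 2 * (\<Sum>t=2..T. p t)) + 9 / 8 * (2 * (d 1)\<^sup>2 + 4 * (\<Sum>t=2..T. (p t)\<^sup>2))"
    using SL SQ SH G0 by (intro add_mono mult_left_mono) auto
  also have "\<dots> \<le> 2 * G * (norm (xstar X f 1) + path_len X f T) + 5 * (norm (xstar X f 1))\<^sup>2
           + (10 - \<mu> / (2 * (\<mu> + 4))) * path_len2 X f T"
  proof -
    have d1: "d 1 = norm (xstar X f 1)" unfolding d_def x1 xs_def by simp
    have P: "(\<Sum>t=2..T. p t) = path_len X f T" unfolding p_def path_len_def xs_def ..
    have P2: "(\<Sum>t=2..T. (p t)\<^sup>2) = path_len2 X f T" unfolding p_def path_len2_def xs_def ..
    have P20: "path_len2 X f T \<ge> 0" unfolding path_len2_def by (simp add: sum_nonneg)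
    have c: "\<mu> / (2 * (\<mu> + 4)) \<le> 1 / 2" using muL by (simp add: field_simps)
    have "9 / 2 * path_len2 X f T \<le> (10 - \<mu> / (2 * (\<mu> + 4))) * path_len2 X f T"
      using c P20 by (intro mult_right_mono) auto
    moreover have "(norm (xstar X f 1))\<^sup>2 \<ge> 0" by simp
    ultimately show ?thesis unfolding d1 P P2 by (rule final_arith)
  qed
  finally show ?thesis unfolding x_def K_def .
qed

end
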